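(* Let $0<b<a<n$ and $0<\alpha<1$ with $\alpha n$ an integer. Let $\mathcal D_1$ be the law of $X_1-Y_1$ where $X_1\sim\mathrm{Binom}(\alpha n, a/n)$ and $Y_1\sim\mathrm{Binom}((1-\alpha)n, b/n)$ are independent, and let $\mathcal D_2$ be the law of $X_2-Y_2$ where $X_2\sim\mathrm{Binom}(\alpha n, b/n)$ and $Y_2\sim\mathrm{Binom}((1-\alpha)n, a/n)$ are independent. Let $C=(\sqrt a-\sqrt b)^2$ and $K=(1-2\alpha)n\,D(a/n,b/n)$. Then for every real $\theta$, \[ \max\Big(\Pr_{x\sim\mathcal D_1}[x+K\le\theta],\ \Pr_{x\sim\mathcal D_2}[x+K\ge-\theta]\Big)\le \exp\!\Big(-\frac C2+\frac\theta2\log R(a/n,b/n)\Big). \]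
   Context: $\mathrm{Binom}(m,p)$ denotes the binomial distribution with $m$ trials and success probability $p$. For $0<p,q<1$: $R(p,q)=\frac{p(1-q)}{q(1-p)}$, and for $p\neq q$, $D(p,q)=\dfrac{\log\frac{1-q}{1-p}}{\log R(p,q)}$. *)

theory Defs
  imports "HOL-Probability.Probability"
begin

definition Rfun :: "real \<Rightarrow> real \<Rightarrow> real" where
  "Rfun p q = (p * (1 - q)) / (q * (1 - p))"

definition Dfun :: "real \<Rightarrow> real \<Rightarrow> real" where
  "Dfun p q = ln ((1 - q) / (1 - p)) / ln (Rfun p q)"

definition binom_diff :: "nat \<Rightarrow> real \<Rightarrow> nat \<Rightarrow> real \<Rightarrow> int pmf" where
  "binom_diff m p k q =
     map_pmf (\<lambda>(x, y). int x - int y) (pair_pmf (binomial_pmf m p) (binomial_pmf k q))"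

end

theory Submission
  imports Defs
begin

lemma binom_sum:
  assumes "0 \<le> p" "p \<le> 1"
  shows "(\<Sum>k\<le>n. exp (s * real k) * pmf (binomial_pmf n p) k) = (1 - p + p * exp s)^n"
proof -
  have "(1 - p + p * exp s)^n = (p * exp s + (1 - p))^n" by (simp add: algebra_simps)
  also have "\<dots> = (\<Sum>k\<le>n. of_nat (n choose k) * (p * exp s)^k * (1-p)^(n-k))"
    by (rule binomial_ring)
  also have "\<dots> = (\<Sum>k\<le>n. exp (s * real k) * pmf (binomial_pmf n p) k)"
    using assms by (intro sum.cong) (auto simp: power_mult_distrib exp_of_nat2_mult mult.commute)
  finally show ?thesis by simp
qed

lemma mgf_pair:
  assumes "0 \<le> p" "p \<le> 1" "0 \<le> q" "q \<le> 1"
  shows "measure_pmf.expectation (pair_pmf (binomial_pmf m p) (binomial_pmf k q))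
      (\<lambda>(x,y). exp (s * real x) * exp (u * real y)) = (1 - p + p * exp s)^m * (1 - q + q * exp u)^k"
proof -
  have "measure_pmf.expectation (pair_pmf (binomial_pmf m p) (binomial_pmf k q))
      (\<lambda>(x,y). exp (s * real x) * exp (u * real y)) =
     (\<Sum>z\<in>{..m}\<times>{..k}. (\<lambda>(x,y). exp (s * real x) * exp (u * real y)) z * pmf (pair_pmf (binomial_pmf m p) (binomial_pmf k q)) z)"
    apply (rule integral_measure_pmf_real)
    using assms by (auto simp: set_pmf_binomial_eq split: if_splits)
  also have "\<dots> = (\<Sum>x\<le>m. \<Sum>y\<le>k. (exp (s * real x) * pmf (binomial_pmf m p) x) * (exp (u * real y) * pmf (binomial_pmf k q) y))"
    unfolding sum.cartesian_product by (intro sum.cong) (auto simp: pmf_pair)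
  also have "\<dots> = (\<Sum>x\<le>m. exp (s * real x) * pmf (binomial_pmf m p) x) * (\<Sum>y\<le>k. exp (u * real y) * pmf (binomial_pmf k q) y)"
    by (simp add: sum_product)
  also have "\<dots> = (1 - p + p * exp s)^m * (1 - q + q * exp u)^k"
    using assms by (simp add: binom_sum del: pmf_binomial)
  finally show ?thesis .
qed

lemma markov_pmf:
  fixes g :: "'a \<Rightarrow> real"
  assumes "finite (set_pmf M)" "\<And>x. 0 \<le> g x" "\<And>x. x \<in> A \<Longrightarrow> 1 \<le> g x"
  shows "measure_pmf.prob M A \<le> measure_pmf.expectation M g"
proof -
  have "measure_pmf.prob M A = measure_pmf.expectation M (indicator A)" by simp
  also have "\<dots> \<le> measure_pmf.expectation M g"
    apply (rule integral_mono)
    using assms by (auto intro: integrable_measure_pmf_finite split: split_indicator)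
  finally show ?thesis .
qed

lemma tail1:
  assumes "0 \<le> p" "p \<le> 1" "0 \<le> q" "q \<le> 1" "0 \<le> t"
  shows "measure_pmf.prob (binom_diff m p k q) {x. real_of_int x + K \<le> \<theta>}
    \<le> exp (t*\<theta> - t*K) * ((1 - p + p * exp (-t))^m * (1 - q + q * exp t)^k)"
proof -
  let ?M = "pair_pmf (binomial_pmf m p) (binomial_pmf k q)"
  let ?g = "\<lambda>z. exp (t*\<theta> - t*K) * (case z of (x,y) \<Rightarrow> exp ((-t) * real x) * exp (t * real y))"
  have fin: "finite (set_pmf ?M)"
    using assms by (auto simp: set_pmf_binomial_eq)
  have "measure_pmf.prob (binom_diff m p k q) {x. real_of_int x + K \<le> \<theta>}
     = measure_pmf.prob ?M ((\<lambda>(x, y). int x - int y) -` {x. real_of_int x + K \<le> \<theta>})"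
    unfolding binom_diff_def by simp
  also have "\<dots> \<le> measure_pmf.expectation ?M ?g"
  proof (rule markov_pmf[OF fin])
    fix z :: "nat \<times> nat" show "0 \<le> ?g z" by (auto split: prod.splits)
  next
    fix z :: "nat \<times> nat" assume "z \<in> (\<lambda>(x, y). int x - int y) -` {x. real_of_int x + K \<le> \<theta>}"
    then obtain x y where z: "z = (x,y)" and h: "real x - real y + K \<le> \<theta>" by (cases z) auto
    have "0 \<le> t * (\<theta> - K - real x + real y)" using h assms by (intro mult_nonneg_nonneg) auto
    then have "1 \<le> exp (t*\<theta> - t*K + (-t) * real x + t * real y)"
      by (simp add: algebra_simps)
    then show "1 \<le> ?g z" using z by (simp add: exp_add[symmetric] algebra_simps)
  qed
  also have "\<dots> = exp (t*\<theta> - t*K) * ((1 - p + p * exp (-t))^m * (1 - q + q * exp t)^k)"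
    using mgf_pair[OF assms(1-4), of m k "-t" t] by simp
  finally show ?thesis .
qed

lemma tail2:
  assumes "0 \<le> p" "p \<le> 1" "0 \<le> q" "q \<le> 1" "0 \<le> t"
  shows "measure_pmf.prob (binom_diff m q k p) {x. real_of_int x + K \<ge> -\<theta>}
    \<le> exp (t*\<theta> + t*K) * ((1 - q + q * exp t)^m * (1 - p + p * exp (-t))^k)"
proof -
  let ?M = "pair_pmf (binomial_pmf m q) (binomial_pmf k p)"
  let ?g = "\<lambda>z. exp (t*\<theta> + t*K) * (case z of (x,y) \<Rightarrow> exp (t * real x) * exp ((-t) * real y))"
  have fin: "finite (set_pmf ?M)"
    using assms by (auto simp: set_pmf_binomial_eq)
  have "measure_pmf.prob (binom_diff m q k p) {x. real_of_int x + K \<ge> -\<theta>}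
     = measure_pmf.prob ?M ((\<lambda>(x, y). int x - int y) -` {x. real_of_int x + K \<ge> -\<theta>})"
    unfolding binom_diff_def by simp
  also have "\<dots> \<le> measure_pmf.expectation ?M ?g"
  proof (rule markov_pmf[OF fin])
    fix z :: "nat \<times> nat" show "0 \<le> ?g z" by (auto split: prod.splits)
  next
    fix z :: "nat \<times> nat" assume "z \<in> (\<lambda>(x, y). int x - int y) -` {x. real_of_int x + K \<ge> -\<theta>}"
    then obtain x y where z: "z = (x,y)" and h: "real x - real y + K \<ge> -\<theta>" by (cases z) auto
    have "0 \<le> t * (\<theta> + K + real x - real y)" using h assms by (intro mult_nonneg_nonneg) auto
    then have "1 \<le> exp (t*\<theta> + t*K + t * real x + (-t) * real y)"
      by (simp add: algebra_simps)
    then show "1 \<le> ?g z" using z by (simp add: exp_add[symmetric] algebra_simps)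
  qed
  also have "\<dots> = exp (t*\<theta> + t*K) * ((1 - q + q * exp t)^m * (1 - p + p * exp (-t))^k)"
    using mgf_pair[OF assms(3,4,1,2), of m k t "-t"] by simp
  finally show ?thesis .
qed

lemma alg:
  fixes p q :: real
  assumes "0 < q" "q < p" "p < 1" and KD: "K = (real k - real m) * Dfun p q"
  defines "t \<equiv> ln (Rfun p q) / 2" and "S \<equiv> sqrt p * sqrt q + sqrt (1-p) * sqrt (1-q)"
  shows "0 \<le> t"
    and "exp (t * \<theta> - t * K) * ((1-p+p * exp(-t))^m * (1-q+q * exp t)^k) = exp (t * \<theta>) * S^(m+k)"
    and "exp (t * \<theta> + t * K) * ((1-q+q * exp t)^m * (1-p+p * exp(-t))^k) = exp (t * \<theta>) * S^(m+k)"
proof -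
  define u where "u = sqrt p"
  define v where "v = sqrt q"
  define uu where "uu = sqrt (1-p)"
  define vv where "vv = sqrt (1-q)"
  have pos: "u > 0" "v > 0" "uu > 0" "vv > 0" using assms by (auto simp: u_def v_def uu_def vv_def)
  have sq: "u^2 = p" "v^2 = q" "uu^2 = 1-p" "vv^2 = 1-q" using assms by (auto simp: u_def v_def uu_def vv_def)
  have R1: "Rfun p q > 1"
  proof -
    have "q * (1-p) < p * (1-q)" using assms by (simp add: algebra_simps)
    moreover have "q * (1-p) > 0" using assms by simp
    ultimately show ?thesis unfolding Rfun_def by simp
  qed
  show t0: "0 \<le> t" using R1 by (simp add: t_def)
  have sR: "sqrt (Rfun p q) = (u * vv)/(v * uu)"
    unfolding Rfun_def u_def v_def uu_def vv_def using assms
    by (simp add: real_sqrt_mult real_sqrt_divide)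
  have et: "exp t = sqrt (Rfun p q)"
    using R1 by (simp add: t_def exp_ln_iff powr_half_sqrt[symmetric] powr_def)
  have emt: "exp (-t) = (v * uu)/(u * vv)" by (simp add: exp_minus et sR)
  define Q where "Q = (1-q)/(1-p)"
  have Q0: "Q > 0" using assms by (simp add: Q_def)
  have sQ: "sqrt Q = vv/uu" unfolding Q_def uu_def vv_def by (simp add: real_sqrt_divide)
  have eQ: "exp (ln Q / 2) = sqrt Q"
    using Q0 by (simp add: powr_half_sqrt[symmetric] powr_def)
  have lnR: "ln (Rfun p q) \<noteq> 0" using R1 by simp
  have tK: "t * K = (real k - real m) * (ln Q / 2)"
    using lnR by (simp add: KD t_def Dfun_def Q_def)
  have A: "1-p+p * exp(-t) = uu * S / vv"
  proof -
    have "1-p+p * exp(-t) = uu^2 + u^2 * (v * uu)/(u * vv)" using sq by (simp add: emt)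
    also have "\<dots> = uu * (uu * vv + u * v) / vv" using pos by (simp add: field_simps power2_eq_square)
    finally show ?thesis by (simp add: S_def u_def v_def uu_def vv_def algebra_simps)
  qed
  have B: "1-q+q * exp t = vv * S / uu"
  proof -
    have "1-q+q * exp t = vv^2 + v^2 * (u * vv)/(v * uu)" using sq by (simp add: et sR)
    also have "\<dots> = vv * (uu * vv + u * v) / uu" using pos by (simp add: field_simps power2_eq_square)
    finally show ?thesis by (simp add: S_def u_def v_def uu_def vv_def algebra_simps)
  qed
  have e1: "exp (- (t * K)) = (vv/uu)^m / (vv/uu)^k"
  proof -
    have "- (t * K) = real m * (ln Q / 2) - real k * (ln Q / 2)" unfolding tK by (simp add: field_simps)
    then have "exp (- (t * K)) = exp (real m * (ln Q / 2)) / exp (real k * (ln Q / 2))" by (simp only: exp_diff)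
    then show ?thesis by (simp only: exp_of_nat_mult eQ sQ)
  qed
  have e2: "exp (t * K) = (vv/uu)^k / (vv/uu)^m"
  proof -
    have "t * K = real k * (ln Q / 2) - real m * (ln Q / 2)" unfolding tK by (simp add: field_simps)
    then have "exp (t * K) = exp (real k * (ln Q / 2)) / exp (real m * (ln Q / 2))" by (simp only: exp_diff)
    then show ?thesis by (simp only: exp_of_nat_mult eQ sQ)
  qed
  have c1: "(vv/uu)^j * (uu * S/vv)^j = S^j" for j
    using pos by (simp add: power_mult_distrib[symmetric])
  have c2: "(vv * S/uu)^j / (vv/uu)^j = S^j" for j
    using pos by (simp add: power_divide[symmetric])
  show "exp (t * \<theta> - t * K) * ((1-p+p * exp(-t))^m * (1-q+q * exp t)^k) = exp (t * \<theta>) * S^(m+k)"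
  proof -
    have E: "exp (t * \<theta> - t * K) = exp (t * \<theta>) * exp (- (t * K))" by (simp add: exp_add[symmetric])
    have "exp (t * \<theta> - t * K) * ((1-p+p * exp(-t))^m * (1-q+q * exp t)^k)
       = exp (t * \<theta>) * (((vv/uu)^m * (uu * S/vv)^m) * ((vv * S/uu)^k / (vv/uu)^k))"
      unfolding E A B e1 by (simp add: field_simps)
    also have "\<dots> = exp (t * \<theta>) * S^(m+k)" by (simp only: c1 c2 power_add)
    finally show ?thesis .
  qed
  show "exp (t * \<theta> + t * K) * ((1-q+q * exp t)^m * (1-p+p * exp(-t))^k) = exp (t * \<theta>) * S^(m+k)"
  proof -
    have E: "exp (t * \<theta> + t * K) = exp (t * \<theta>) * exp (t * K)" by (simp add: exp_add)
    have "exp (t * \<theta> + t * K) * ((1-q+q * exp t)^m * (1-p+p * exp(-t))^k)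
       = exp (t * \<theta>) * (((vv/uu)^k * (uu * S/vv)^k) * ((vv * S/uu)^m / (vv/uu)^m))"
      unfolding E A B e2 by (simp add: field_simps)
    also have "\<dots> = exp (t * \<theta>) * S^(m+k)" by (simp only: c1 c2 power_add mult.commute[of "S^k" "S^m"])
    finally show ?thesis .
  qed
qed

lemma Sbound:
  fixes p q :: real
  assumes "0 < q" "q < p" "p < 1"
  shows "(sqrt p * sqrt q + sqrt (1-p) * sqrt (1-q))^n \<le> exp (- (real n * (sqrt p - sqrt q)^2) / 2)"
proof -
  define u where "u = sqrt p"
  define v where "v = sqrt q"
  define uu where "uu = sqrt (1-p)"
  define vv where "vv = sqrt (1-q)"
  have pos: "u > 0" "v > 0" "uu > 0" "vv > 0" using assms by (auto simp: u_def v_def uu_def vv_def)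
  have sq: "u^2 = p" "v^2 = q" "uu^2 = 1-p" "vv^2 = 1-q" using assms by (auto simp: u_def v_def uu_def vv_def)
  define S where "S = u * v + uu * vv"
  have "(u-v)^2 + (uu-vv)^2 = 2 - 2 * S"
    using sq unfolding S_def by (simp add: power2_diff algebra_simps)
  then have S1: "S \<le> 1 - (u-v)^2/2" using zero_le_power2[of "uu-vv"] by linarith
  have S0: "0 \<le> S" using pos by (simp add: S_def)
  have "S^n \<le> (exp (- ((u-v)^2/2)))^n"
    apply (rule power_mono)
    using S1 exp_ge_add_one_self[of "- ((u-v)^2/2)"] S0 by linarith+
  also have "\<dots> = exp (- (real n * (u - v)^2) / 2)"
    by (simp add: exp_of_nat_mult[symmetric])
  finally show ?thesis by (simp add: S_def u_def v_def uu_def vv_def)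
qed

theorem mainTheorem5:
  fixes n m :: nat and a b \<alpha> \<theta> :: real
  assumes "0 < b" "b < a" "a < real n"
    and "0 < \<alpha>" "\<alpha> < 1" "\<alpha> * real n = real m"
  shows "max (measure_pmf.prob (binom_diff m (a / n) (n - m) (b / n))
               {x. real_of_int x + (1 - 2 * \<alpha>) * real n * Dfun (a / n) (b / n) \<le> \<theta>})
             (measure_pmf.prob (binom_diff m (b / n) (n - m) (a / n))
               {x. real_of_int x + (1 - 2 * \<alpha>) * real n * Dfun (a / n) (b / n) \<ge> - \<theta>})
         \<le> exp (- ((sqrt a - sqrt b)^2) / 2 + \<theta> / 2 * ln (Rfun (a / n) (b / n)))"
proof -
  define p where "p = a / n"
  define q where "q = b / n"
  define K where "K = (1 - 2 * \<alpha>) * real n * Dfun p q"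
  define t where "t = ln (Rfun p q) / 2"
  define S where "S = sqrt p * sqrt q + sqrt (1-p) * sqrt (1-q)"
  have n0: "real n > 0" using assms by linarith
  have pq: "0 < q" "q < p" "p < 1" "0 \<le> p" "p \<le> 1" "0 \<le> q" "q \<le> 1"
    using assms n0 by (auto simp: p_def q_def divide_strict_right_mono)
  have mn: "m < n"
  proof -
    have "real m < real n" using assms n0 by (metis mult_less_cancel_right2 mult_strict_right_mono mult_1)
    then show ?thesis by simp
  qed
  have KD: "K = (real (n-m) - real m) * Dfun p q"
    unfolding K_def using assms(6) mn by (simp add: algebra_simps of_nat_diff)
  have mk: "m + (n - m) = n" using mn by simp
  have C: "real n * (sqrt p - sqrt q)^2 = (sqrt a - sqrt b)^2"
    using n0 by (simp add: p_def q_def real_sqrt_divide power2_eq_square field_simps)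
  have fin: "exp (t * \<theta>) * S^n \<le> exp (- ((sqrt a - sqrt b)^2) / 2 + \<theta> / 2 * ln (Rfun p q))"
  proof -
    have "exp (t * \<theta>) * S^n \<le> exp (t * \<theta>) * exp (- (real n * (sqrt p - sqrt q)^2) / 2)"
      using Sbound[OF pq(1-3), of n] by (simp add: S_def)
    also have "\<dots> = exp (- ((sqrt a - sqrt b)^2) / 2 + \<theta> / 2 * ln (Rfun p q))"
      by (simp add: C t_def exp_add[symmetric] algebra_simps)
    finally show ?thesis .
  qed
  have t0: "0 \<le> t" using alg(1)[OF pq(1-3) KD] by (simp add: t_def)
  have P1: "measure_pmf.prob (binom_diff m p (n - m) q) {x. real_of_int x + K \<le> \<theta>}
      \<le> exp (- ((sqrt a - sqrt b)^2) / 2 + \<theta> / 2 * ln (Rfun p q))"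
    using tail1[OF pq(4-7) t0, where m=m and k="n-m" and K=K and \<theta>=\<theta>] alg(2)[OF pq(1-3) KD, of \<theta>] fin
    unfolding t_def S_def mk by linarith
  have P2: "measure_pmf.prob (binom_diff m q (n - m) p) {x. real_of_int x + K \<ge> -\<theta>}
      \<le> exp (- ((sqrt a - sqrt b)^2) / 2 + \<theta> / 2 * ln (Rfun p q))"
    using tail2[OF pq(4-7) t0, where m=m and k="n-m" and K=K and \<theta>=\<theta>] alg(3)[OF pq(1-3) KD, of \<theta>] fin
    unfolding t_def S_def mk by linarith
  show ?thesis using P1 P2 unfolding p_def q_def K_def by simp
qed

end
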